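(* Let $\pi$ be a policy on a finite state space $\mathcal{S}$ whose induced Markov chain with transition matrix $P^\pi$ is irreducible and aperiodic, with stationary distribution $\mu^\pi$, and let $\lambda\in[0,1)$. Let $\Phi\in\mathbb{R}^{|\mathcal{S}|\times d}$ have full column rank. Then the solution set of the projected Bellman equation $\Phi\theta=\Pi_{D,W_\Phi}\mathcal{T}^{(\lambda)}(\Phi\theta)$ is $\mathcal{L}_{\Phi,e}:=\theta^*+S_{\Phi,e}$, where $\theta^*\in E_{\Phi,e}$ is the unique solution of $\Phi\theta=\Pi_{D,W_{E_{\Phi,e}}}\mathcal{T}^{(\lambda)}(\Phi\theta)$.
   Context: $\mathcal{R}^\pi\in\mathbb{R}^{|\mathcal{S}|}$ is the reward vector under $\pi$, $r(\pi)=(\mu^\pi)^\top\mathcal{R}^\pi$, $e$ the all-ones vector. Bellman operator $\mathcal{T}(v)=\mathcal{R}^\pi-r(\pi)e+P^\pi v$; $\mathcal{T}^m$ is its $m$-fold composition; $\mathcal{T}^{(\lambda)}(v)=(1-\lambda)\sum_{m=0}^\infty\lambda^m\mathcal{T}^{m+1}(v)$. $D=\mathrm{diag}(\mu^\pi)$, $\|x\|_D=\sqrt{x^\top Dx}$. $W_\Phi=\{\Phi\theta:\theta\in\mathbb{R}^d\}$ and $\Pi_{D,W}$ denotes the $\|\cdot\|_D$-orthogonal projection onto a subspace $W$. $S_{\Phi,e}=\mathrm{span}\{\theta\in\mathbb{R}^d:\Phi\theta=e\}$ (equal to $\{c\theta_e:c\in\mathbb{R}\}$ if some $\theta_e$ satisfies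 $\Phi\theta_e=e$, and $\{0\}$ otherwise); $E_{\Phi,e}$ is the orthogonal complement of $S_{\Phi,e}$ in $\mathbb{R}^d$; $W_{E_{\Phi,e}}=\{\Phi\theta:\theta\in E_{\Phi,e}\}$. *)

theory Defs
  imports "HOL-Analysis.Analysis"
begin

text \<open>States are the elements of a finite type 's; features are indexed by a finite type 'd.
Vectors in R^|S| are real^'s, matrices P :: real^'s^'s (row i = transitions out of state i),
Phi :: real^'d^'s (|S| x d).\<close>

definition mat_pow :: "real^'s^'s \<Rightarrow> nat \<Rightarrow> real^'s^'s" where
  "mat_pow P n = ((\<lambda>A. A ** P) ^^ n) (mat 1)"

definition stochastic :: "real^'s^'s \<Rightarrow> bool" where
  "stochastic P \<longleftrightarrow> (\<forall>i j. P $ i $ j \<ge> 0) \<and> (\<forall>i. (\<Sum>j\<in>UNIV. P $ i $ j) = 1)"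

definition irreducible :: "real^'s^'s \<Rightarrow> bool" where
  "irreducible P \<longleftrightarrow> (\<forall>i j. \<exists>n. mat_pow P n $ i $ j > 0)"

definition period :: "real^'s^'s \<Rightarrow> 's \<Rightarrow> nat" where
  "period P i = Gcd {n. n > 0 \<and> mat_pow P n $ i $ i > 0}"

definition aperiodic :: "real^'s^'s \<Rightarrow> bool" where
  "aperiodic P \<longleftrightarrow> (\<forall>i. period P i = 1)"

definition stationary_dist :: "real^'s^'s \<Rightarrow> real^'s \<Rightarrow> bool" where
  "stationary_dist P \<mu> \<longleftrightarrow> (\<forall>i. \<mu> $ i \<ge> 0) \<and> (\<Sum>i\<in>UNIV. \<mu> $ i) = 1 \<and> \<mu> v* P = \<mu>"

text \<open>average reward r(pi) = mu^T R\<close>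
definition avg_reward :: "real^'s \<Rightarrow> real^'s \<Rightarrow> real" where
  "avg_reward \<mu> R = \<mu> \<bullet> R"

text \<open>Bellman operator T(v) = R - r(pi) e + P v\<close>
definition bellman :: "real^'s^'s \<Rightarrow> real^'s \<Rightarrow> real^'s \<Rightarrow> real^'s \<Rightarrow> real^'s" where
  "bellman P \<mu> R v = R - avg_reward \<mu> R *\<^sub>R (1::real^'s) + P *v v"

text \<open>T^(lambda)(v) = (1-lambda) sum_{m>=0} lambda^m T^{m+1}(v)\<close>
definition bellman_lambda :: "real \<Rightarrow> real^'s^'s \<Rightarrow> real^'s \<Rightarrow> real^'s \<Rightarrow> real^'s \<Rightarrow> real^'s" where
  "bellman_lambda lam P \<mu> R v =
     (1 - lam) *\<^sub>R (\<Sum>m. (lam ^ m) *\<^sub>R ((bellman P \<mu> R ^^ (m + 1)) v))"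

text \<open>D-weighted inner product <x,y>_D = x^T diag(mu) y\<close>
definition innerD :: "real^'s \<Rightarrow> real^'s \<Rightarrow> real^'s \<Rightarrow> real" where
  "innerD \<mu> x y = (\<Sum>i\<in>UNIV. \<mu> $ i * x $ i * y $ i)"

text \<open>||.||_D-orthogonal projection onto a subspace W\<close>
definition projD :: "real^'s \<Rightarrow> (real^'s) set \<Rightarrow> real^'s \<Rightarrow> real^'s" where
  "projD \<mu> W x = (THE y. y \<in> W \<and> (\<forall>w\<in>W. innerD \<mu> (x - y) w = 0))"

definition W_span :: "real^'d^'s \<Rightarrow> (real^'d) set \<Rightarrow> (real^'s) set" where
  "W_span \<Phi> E = (\<lambda>\<theta>. \<Phi> *v \<theta>) ` E"

definition S_Phi_e :: "real^'d^'s \<Rightarrow> (real^'d) set" where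
  "S_Phi_e \<Phi> = span {\<theta>. \<Phi> *v \<theta> = (1::real^'s)}"

definition E_Phi_e :: "real^'d^'s \<Rightarrow> (real^'d) set" where
  "E_Phi_e \<Phi> = {\<theta>. \<forall>s\<in>S_Phi_e \<Phi>. \<theta> \<bullet> s = 0}"

end

theory Submission
  imports Defs
begin

lemma summable_nlam:
  fixes x :: real assumes "0 \<le> x" "x < 1"
  shows "summable (\<lambda>n. real n * x^n)"
proof -
  define s where "s = sqrt x"
  have s0: "0 \<le> s" and s1: "s < 1" using assms by (auto simp: s_def)
  have "(\<lambda>n. of_nat n * s ^ n) \<longlonglongrightarrow> (0::real)"
    by (rule powser_times_n_limit_0) (use s0 s1 in auto)
  then have "Bseq (\<lambda>n. of_nat n * s ^ n :: real)" using convergent_imp_Bseq convergent_def by blast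
  then obtain K where K: "\<And>n. norm (of_nat n * s ^ n :: real) \<le> K" by (meson BseqE)
  have xs: "x ^ n = s^n * s^n" for n
    using assms by (simp add: s_def power_mult_distrib[symmetric])
  show ?thesis
  proof (rule summable_comparison_test)
    show "\<exists>N. \<forall>n\<ge>N. norm (real n * x ^ n) \<le> K * s^n"
    proof (intro exI allI impI)
      fix n :: nat
      have "norm (real n * x ^ n) = norm (of_nat n * s ^ n :: real) * s^n"
        using s0 assms by (simp add: xs abs_mult)
      also have "\<dots> \<le> K * s^n" using K[of n] s0 by (intro mult_right_mono) auto
      finally show "norm (real n * x ^ n) \<le> K * s^n" .
    qed
    show "summable (\<lambda>n. K * s^n)" using s0 s1 by (intro summable_mult summable_geometric) auto
  qed
qed

lemma Q_bnd:
  fixes P :: "real^'s^'s"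
  assumes "stochastic P" "\<And>j. \<bar>u$j\<bar> \<le> B"
  shows "\<bar>(P *v u)$i\<bar> \<le> B"
proof -
  have "\<bar>(P *v u)$i\<bar> = \<bar>\<Sum>j\<in>UNIV. P$i$j * u$j\<bar>" by (simp add: matrix_vector_mult_def)
  also have "\<dots> \<le> (\<Sum>j\<in>UNIV. \<bar>P$i$j * u$j\<bar>)" by (rule sum_abs)
  also have "\<dots> \<le> (\<Sum>j\<in>UNIV. P$i$j * B)"
    using assms unfolding stochastic_def
    by (intro sum_mono) (simp add: abs_mult mult_left_mono)
  also have "\<dots> = B" using assms unfolding stochastic_def by (simp add: sum_distrib_right[symmetric])
  finally show ?thesis .
qed

lemma Qn_bnd:
  fixes P :: "real^'s^'s"
  assumes "stochastic P" "\<And>j. \<bar>u$j\<bar> \<le> B"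
  shows "\<bar>(((*v) P ^^ n) u)$i\<bar> \<le> B"
  using assms(2) by (induction n arbitrary: i) (auto intro: Q_bnd[OF assms(1)])

lemma bell_iter_add:
  "(bellman P \<mu> R ^^ n) (v + u) = (bellman P \<mu> R ^^ n) v + ((*v) P ^^ n) u"
  by (induction n) (auto simp: bellman_def matrix_vector_right_distrib)

lemma bell0_bnd:
  fixes P :: "real^'s^'s"
  assumes "stochastic P" "\<And>j. \<bar>(R - avg_reward \<mu> R *\<^sub>R (1::real^'s))$j\<bar> \<le> B"
  shows "\<bar>((bellman P \<mu> R ^^ n) 0)$i\<bar> \<le> real n * B"
proof (induction n arbitrary: i)
  case 0 then show ?case by simp
next
  case (Suc n)
  have "\<bar>(P *v (bellman P \<mu> R ^^ n) 0)$i\<bar> \<le> real n * B"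
    by (rule Q_bnd[OF assms(1)]) (use Suc in auto)
  have e: "(bellman P \<mu> R ^^ Suc n) 0 = (R - avg_reward \<mu> R *\<^sub>R (1::real^'s)) + P *v ((bellman P \<mu> R ^^ n) 0)"
    by (simp add: bellman_def)
  have "\<bar>((bellman P \<mu> R ^^ Suc n) 0)$i\<bar> \<le> \<bar>(R - avg_reward \<mu> R *\<^sub>R (1::real^'s))$i\<bar> + \<bar>(P *v (bellman P \<mu> R ^^ n) 0)$i\<bar>"
    unfolding e vector_add_component by (rule abs_triangle_ineq)
  then show ?case using assms(2)[of i] \<open>\<bar>(P *v (bellman P \<mu> R ^^ n) 0)$i\<bar> \<le> real n * B\<close>
    by (simp add: algebra_simps)
qed

lemma norm_vec_bnd:
  fixes x :: "real^'s"
  assumes "\<And>i. \<bar>x$i\<bar> \<le> B"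
  shows "norm x \<le> real CARD('s) * B"
proof -
  have "norm x \<le> (\<Sum>i\<in>UNIV. \<bar>x$i\<bar>)" by (rule norm_le_l1_cart)
  also have "\<dots> \<le> (\<Sum>i\<in>(UNIV::'s set). B)" by (meson assms sum_mono)
  finally show ?thesis by simp
qed

lemma summable_Q:
  fixes P :: "real^'s^'s"
  assumes "stochastic P" "0 \<le> lam" "lam < 1"
  shows "summable (\<lambda>m. lam^m *\<^sub>R ((*v) P ^^ k m) u)"
proof (rule summable_comparison_test)
  define B where "B = (\<Sum>j\<in>UNIV. \<bar>u$j\<bar>)"
  have "\<bar>u$j\<bar> \<le> B" for j unfolding B_def by (rule member_le_sum) auto
  then have "norm (((*v) P ^^ k m) u) \<le> real CARD('s) * B" for m
    by (intro norm_vec_bnd Qn_bnd[OF assms(1)])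
  then show "\<exists>N. \<forall>n\<ge>N. norm (lam^n *\<^sub>R ((*v) P ^^ k n) u) \<le> (real CARD('s) * B) * lam^n"
    using assms by (auto intro!: mult_left_mono simp: mult.commute)
  show "summable (\<lambda>n. (real CARD('s) * B) * lam^n)"
    using assms by (intro summable_mult summable_geometric) auto
qed

lemma summable_bell0:
  fixes P :: "real^'s^'s"
  assumes "stochastic P" "0 \<le> lam" "lam < 1"
  shows "summable (\<lambda>m. lam^m *\<^sub>R ((bellman P \<mu> R ^^ (m+1)) 0))"
proof (rule summable_comparison_test)
  define b where "b = R - avg_reward \<mu> R *\<^sub>R (1::real^'s)"
  define B where "B = (\<Sum>j\<in>UNIV. \<bar>b$j\<bar>)"
  have "\<bar>b$j\<bar> \<le> B" for j unfolding B_def by (rule member_le_sum) auto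
  then have "norm ((bellman P \<mu> R ^^ (m+1)) 0) \<le> real CARD('s) * (real (m+1) * B)" for m
    by (intro norm_vec_bnd bell0_bnd[OF assms(1)]) (auto simp: b_def)
  then show "\<exists>N. \<forall>n\<ge>N. norm (lam^n *\<^sub>R ((bellman P \<mu> R ^^ (n+1)) 0))
      \<le> (real CARD('s) * B) * (real n * lam^n) + (real CARD('s) * B) * lam^n"
  proof (intro exI allI impI)
    fix n :: nat
    have "norm (lam^n *\<^sub>R ((bellman P \<mu> R ^^ (n+1)) 0)) = lam^n * norm ((bellman P \<mu> R ^^ (n+1)) 0)"
      using assms by simp
    also have "\<dots> \<le> lam^n * (real CARD('s) * (real (n+1) * B))"
      using \<open>\<And>m. norm ((bellman P \<mu> R ^^ (m+1)) 0) \<le> real CARD('s) * (real (m+1) * B)\<close> assms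
      by (intro mult_left_mono) auto
    also have "\<dots> = (real CARD('s) * B) * (real n * lam^n) + (real CARD('s) * B) * lam^n"
      by (simp add: algebra_simps)
    finally show "norm (lam^n *\<^sub>R ((bellman P \<mu> R ^^ (n+1)) 0))
      \<le> (real CARD('s) * B) * (real n * lam^n) + (real CARD('s) * B) * lam^n" .
  qed
  show "summable (\<lambda>n. (real CARD('s) * B) * (real n * lam^n) + (real CARD('s) * B) * lam^n)"
    using assms by (intro summable_add summable_mult summable_geometric summable_nlam) auto
qed

lemma summable_bell:
  fixes P :: "real^'s^'s"
  assumes "stochastic P" "0 \<le> lam" "lam < 1"
  shows "summable (\<lambda>m. lam^m *\<^sub>R ((bellman P \<mu> R ^^ (m+1)) v))"
proof -
  have "(bellman P \<mu> R ^^ (m+1)) v = (bellman P \<mu> R ^^ (m+1)) 0 + ((*v) P ^^ (m+1)) v" for m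
    using bell_iter_add[where n="m+1" and v=0 and u=v and P=P] by simp
  then show ?thesis
    using summable_add[OF summable_bell0[OF assms, where \<mu>=\<mu> and R=R] summable_Q[OF assms, where k="\<lambda>m. m+1" and u=v]]
    by (simp add: scaleR_add_right)
qed

definition Gop :: "real \<Rightarrow> real^'s^'s \<Rightarrow> real^'s \<Rightarrow> real^'s" where
  "Gop lam P u = (1 - lam) *\<^sub>R (\<Sum>m. lam^m *\<^sub>R ((*v) P ^^ (m+1)) u)"

lemma T_add:
  fixes P :: "real^'s^'s"
  assumes "stochastic P" "0 \<le> lam" "lam < 1"
  shows "bellman_lambda lam P \<mu> R (v + u) = bellman_lambda lam P \<mu> R v + Gop lam P u"
proof -
  have "(\<lambda>m. lam^m *\<^sub>R (bellman P \<mu> R ^^ (m+1)) (v + u))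
      = (\<lambda>m. lam^m *\<^sub>R (bellman P \<mu> R ^^ (m+1)) v + lam^m *\<^sub>R ((*v) P ^^ (m+1)) u)"
    by (simp only: bell_iter_add scaleR_add_right)
  then have "(\<Sum>m. lam^m *\<^sub>R (bellman P \<mu> R ^^ (m+1)) (v + u))
     = (\<Sum>m. lam^m *\<^sub>R (bellman P \<mu> R ^^ (m+1)) v) + (\<Sum>m. lam^m *\<^sub>R ((*v) P ^^ (m+1)) u)"
    using suminf_add[OF summable_bell[OF assms, where \<mu>=\<mu> and R=R and v=v] summable_Q[OF assms, where k="\<lambda>m. m+1" and u=u]]
    by (simp only:)
  then show ?thesis
    unfolding bellman_lambda_def Gop_def by (simp only: scaleR_add_right)
qed

lemma linear_Qn: "linear (((*v) (P::real^'s^'s)) ^^ n)"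
proof (induction n)
  case 0 then show ?case by (auto simp: linear_iff)
next
  case (Suc n)
  have "((*v) P ^^ Suc n) = (*v) P \<circ> ((*v) P ^^ n)" by simp
  then show ?case using linear_compose[OF Suc matrix_vector_mul_linear[of P]] by (simp only:)
qed

lemma Gop_linear:
  fixes P :: "real^'s^'s"
  assumes "stochastic P" "0 \<le> lam" "lam < 1"
  shows "linear (Gop lam P)"
proof (rule linearI)
  fix x y :: "real^'s" and c :: real
  have "(\<lambda>m. lam^m *\<^sub>R ((*v) P ^^ (m+1)) (x + y))
      = (\<lambda>m. lam^m *\<^sub>R ((*v) P ^^ (m+1)) x + lam^m *\<^sub>R ((*v) P ^^ (m+1)) y)"
    by (simp only: linear_add[OF linear_Qn] scaleR_add_right)
  then have "(\<Sum>m. lam^m *\<^sub>R ((*v) P ^^ (m+1)) (x + y))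
     = (\<Sum>m. lam^m *\<^sub>R ((*v) P ^^ (m+1)) x) + (\<Sum>m. lam^m *\<^sub>R ((*v) P ^^ (m+1)) y)"
    using suminf_add[OF summable_Q[OF assms, where k="\<lambda>m. m+1" and u=x] summable_Q[OF assms, where k="\<lambda>m. m+1" and u=y]]
    by (simp only:)
  then show "Gop lam P (x + y) = Gop lam P x + Gop lam P y"
    unfolding Gop_def by (simp only: scaleR_add_right)
  have "(\<lambda>m. lam^m *\<^sub>R ((*v) P ^^ (m+1)) (c *\<^sub>R x))
      = (\<lambda>m. c *\<^sub>R (lam^m *\<^sub>R ((*v) P ^^ (m+1)) x))"
    by (simp add: linear_cmul[OF linear_Qn] matrix_vector_mult_scaleR mult.commute del: funpow.simps)
  then have "(\<Sum>m. lam^m *\<^sub>R ((*v) P ^^ (m+1)) (c *\<^sub>R x)) = c *\<^sub>R (\<Sum>m. lam^m *\<^sub>R ((*v) P ^^ (m+1)) x)"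
    using suminf_scaleR_right[OF summable_Q[OF assms, where k="\<lambda>m. m+1" and u=x], of c]
    by (simp only:)
  then show "Gop lam P (c *\<^sub>R x) = c *\<^sub>R Gop lam P x"
    unfolding Gop_def by (simp only: scaleR_scaleR mult.commute)
qed

lemma Q_one:
  fixes P :: "real^'s^'s"
  assumes "stochastic P"
  shows "P *v 1 = 1"
  using assms by (simp add: vec_eq_iff matrix_vector_mult_def stochastic_def)

lemma Qn_one:
  fixes P :: "real^'s^'s"
  assumes "stochastic P"
  shows "((*v) P ^^ n) 1 = 1"
  by (induction n) (simp_all add: Q_one[OF assms])

lemma Gop_one:
  fixes P :: "real^'s^'s"
  assumes "stochastic P" "0 \<le> lam" "lam < 1"
  shows "Gop lam P 1 = 1"
proof -
  have s: "summable (\<lambda>m. lam^m)" using assms by (intro summable_geometric) auto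
  have "(\<Sum>m. lam^m *\<^sub>R ((*v) P ^^ (m+1)) (1::real^'s)) = (\<Sum>m. lam^m *\<^sub>R (1::real^'s))"
    by (simp only: Qn_one[OF assms(1)])
  also have "\<dots> = (\<Sum>m. lam^m) *\<^sub>R 1" by (rule suminf_scaleR_left[OF s, symmetric])
  also have "\<dots> = (1 / (1 - lam)) *\<^sub>R 1" using assms by (subst suminf_geometric) auto
  finally show ?thesis unfolding Gop_def using assms by simp
qed

lemma mu_one: "\<mu> \<bullet> (1::real^'s) = (\<Sum>i\<in>UNIV. \<mu>$i)"
  by (simp add: inner_vec_def)

lemma mu_bell:
  fixes P :: "real^'s^'s"
  assumes "stationary_dist P \<mu>"
  shows "\<mu> \<bullet> bellman P \<mu> R w = \<mu> \<bullet> w"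
proof -
  have "\<mu> \<bullet> (P *v w) = \<mu> \<bullet> w" using assms dot_lmul_matrix[of \<mu> P w]
    by (simp add: stationary_dist_def)
  then show ?thesis using assms
    by (simp add: bellman_def inner_diff_right inner_add_right mu_one stationary_dist_def avg_reward_def)
qed

lemma mu_bell_iter:
  fixes P :: "real^'s^'s"
  assumes "stationary_dist P \<mu>"
  shows "\<mu> \<bullet> (bellman P \<mu> R ^^ n) w = \<mu> \<bullet> w"
  by (induction n) (simp_all add: mu_bell[OF assms])

lemma mu_T:
  fixes P :: "real^'s^'s"
  assumes "stochastic P" "0 \<le> lam" "lam < 1" "stationary_dist P \<mu>"
  shows "\<mu> \<bullet> bellman_lambda lam P \<mu> R v = \<mu> \<bullet> v"
proof -
  have s: "summable (\<lambda>m. lam^m)" using assms by (intro summable_geometric) auto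
  have "\<mu> \<bullet> (\<Sum>m. lam^m *\<^sub>R ((bellman P \<mu> R ^^ (m+1)) v)) = (\<Sum>m. \<mu> \<bullet> (lam^m *\<^sub>R ((bellman P \<mu> R ^^ (m+1)) v)))"
    by (rule bounded_linear.suminf[OF bounded_linear_inner_right summable_bell[OF assms(1-3)]])
  also have "\<dots> = (\<Sum>m. lam^m * (\<mu> \<bullet> v))" by (simp add: mu_bell_iter[OF assms(4)] del: funpow.simps)
  also have "\<dots> = (\<Sum>m. lam^m) * (\<mu> \<bullet> v)" using suminf_mult2[OF s] by simp
  also have "\<dots> = (\<mu> \<bullet> v) / (1 - lam)" using assms by (subst suminf_geometric) auto
  finally show ?thesis unfolding bellman_lambda_def using assms by simp
qed

lemma G_rec:
  fixes P :: "real^'s^'s"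
  assumes "stochastic P" "0 \<le> lam" "lam < 1"
  shows "Gop lam P u = (1 - lam) *\<^sub>R (P *v u) + lam *\<^sub>R (P *v Gop lam P u)"
proof -
  define f where "f m = lam^m *\<^sub>R ((*v) P ^^ (m+1)) u" for m
  have sf: "summable f" unfolding f_def by (rule summable_Q[OF assms])
  have "P *v suminf f = (\<Sum>m. P *v f m)"
    by (rule bounded_linear.suminf[OF matrix_vector_mul_bounded_linear sf])
  then have "lam *\<^sub>R (P *v suminf f) = (\<Sum>m. lam *\<^sub>R (P *v f m))"
    using suminf_scaleR_right[OF bounded_linear.summable[OF matrix_vector_mul_bounded_linear sf], of lam]
    by simp
  also have "(\<lambda>m. lam *\<^sub>R (P *v f m)) = (\<lambda>m. f (Suc m))"
    by (simp add: f_def matrix_vector_mult_scaleR)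
  also have "(\<Sum>m. f (Suc m)) = suminf f - P *v u"
    using suminf_split_head[OF sf] by (simp add: f_def)
  finally have e: "lam *\<^sub>R (P *v suminf f) = suminf f - P *v u" .
  have "Gop lam P u = (1 - lam) *\<^sub>R suminf f" unfolding Gop_def f_def ..
  moreover have "P *v Gop lam P u = (1 - lam) *\<^sub>R (P *v suminf f)"
    unfolding Gop_def f_def by (simp add: matrix_vector_mult_scaleR)
  ultimately have "(1 - lam) *\<^sub>R (P *v u) + lam *\<^sub>R (P *v Gop lam P u)
     = (1 - lam) *\<^sub>R (P *v u) + (1 - lam) *\<^sub>R (lam *\<^sub>R (P *v suminf f))" by simp
  also have "\<dots> = (1 - lam) *\<^sub>R (P *v u) + (1 - lam) *\<^sub>R (suminf f - P *v u)" by (simp only: e)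
  also have "\<dots> = (1 - lam) *\<^sub>R suminf f" by (simp add: scaleR_right_diff_distrib)
  finally show ?thesis using \<open>Gop lam P u = (1 - lam) *\<^sub>R suminf f\<close> by simp
qed

definition sc :: "real^'s \<Rightarrow> real^'s \<Rightarrow> real^'s" where
  "sc \<mu> x = (\<chi> i. sqrt (\<mu>$i) * x$i)"

lemma sc_linear: "linear (sc \<mu>)"
  by (rule linearI) (simp_all add: sc_def vec_eq_iff algebra_simps)

lemma sc_add: "sc \<mu> (x + y) = sc \<mu> x + sc \<mu> y"
  by (rule linear_add[OF sc_linear])
lemma sc_diff: "sc \<mu> (x - y) = sc \<mu> x - sc \<mu> y"
  by (rule linear_diff[OF sc_linear])
lemma sc_scale: "sc \<mu> (c *\<^sub>R x) = c *\<^sub>R sc \<mu> x"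
  by (rule linear_cmul[OF sc_linear])

lemma innerD_sc:
  assumes "\<And>i. \<mu>$i \<ge> 0"
  shows "innerD \<mu> x y = sc \<mu> x \<bullet> sc \<mu> y"
proof -
  have eq: "sqrt (\<mu>$i) * x$i * (sqrt (\<mu>$i) * y$i) = \<mu>$i * x$i * y$i" for i
  proof -
    have "sqrt (\<mu>$i) * x$i * (sqrt (\<mu>$i) * y$i) = (sqrt (\<mu>$i) * sqrt (\<mu>$i)) * x$i * y$i"
      by (simp only: mult_ac)
    also have "\<dots> = \<mu>$i * x$i * y$i" using assms[of i] by (simp only: real_sqrt_mult_self abs_of_nonneg)
    finally show ?thesis .
  qed
  show ?thesis
    unfolding innerD_def inner_vec_def sc_def vec_lambda_beta inner_real_def
    by (rule sum.cong[OF refl]) (rule eq[symmetric])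
qed

lemma sc_zero:
  assumes "\<And>i. \<mu>$i > 0" "sc \<mu> x = 0"
  shows "x = 0"
proof -
  have h: "sqrt (\<mu>$i) * x$i = 0" for i using assms(2) by (simp add: sc_def vec_eq_iff)
  have "x$i = 0" for i using h[of i] assms(1)[of i] by simp
  then show ?thesis by (simp add: vec_eq_iff)
qed

lemma jensen_row:
  fixes p x :: "'s::finite \<Rightarrow> real"
  assumes "\<And>j. p j \<ge> 0" "(\<Sum>j\<in>UNIV. p j) = 1"
  shows "(\<Sum>j\<in>UNIV. p j * x j)^2 \<le> (\<Sum>j\<in>UNIV. p j * (x j)^2)"
proof -
  define m where "m = (\<Sum>j\<in>UNIV. p j * x j)"
  have "0 \<le> (\<Sum>j\<in>UNIV. p j * (x j - m)^2)" using assms by (intro sum_nonneg) auto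
  also have "(\<Sum>j\<in>UNIV. p j * (x j - m)^2) = (\<Sum>j\<in>UNIV. p j * (x j)^2 - 2 * m * (p j * x j) + m^2 * p j)"
    by (intro sum.cong) (auto simp: power2_eq_square algebra_simps)
  also have "\<dots> = (\<Sum>j\<in>UNIV. p j * (x j)^2) - 2 * m * m + m^2 * 1"
    by (simp add: sum.distrib sum_subtractf sum_distrib_left[symmetric] m_def assms(2))
  finally show ?thesis by (simp add: m_def power2_eq_square)
qed

lemma Q_contr:
  fixes P :: "real^'s^'s"
  assumes "stochastic P" "stationary_dist P \<mu>"
  shows "norm (sc \<mu> (P *v x)) \<le> norm (sc \<mu> x)"
proof -
  have mu0: "\<And>i. \<mu>$i \<ge> 0" using assms(2) by (simp add: stationary_dist_def)
  have nsq: "(norm (sc \<mu> y))^2 = (\<Sum>i\<in>UNIV. \<mu>$i * (y$i)^2)" for y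
  proof -
    have "(norm (sc \<mu> y))^2 = innerD \<mu> y y" by (simp add: innerD_sc[OF mu0] power2_norm_eq_inner)
    then show ?thesis by (simp add: innerD_def power2_eq_square mult.assoc)
  qed
  have row: "((P *v x)$i)^2 \<le> (\<Sum>j\<in>UNIV. P$i$j * (x$j)^2)" for i
    using jensen_row[of "\<lambda>j. P$i$j" "\<lambda>j. x$j"] assms(1)
    by (simp add: stochastic_def matrix_vector_mult_def)
  have "(\<Sum>i\<in>UNIV. \<mu>$i * ((P *v x)$i)^2) \<le> (\<Sum>i\<in>UNIV. \<mu>$i * (\<Sum>j\<in>UNIV. P$i$j * (x$j)^2))"
    using row mu0 by (intro sum_mono mult_left_mono) auto
  also have "\<dots> = (\<Sum>j\<in>UNIV. (\<Sum>i\<in>UNIV. \<mu>$i * P$i$j) * (x$j)^2)"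
  proof -
    have "(\<Sum>i\<in>UNIV. \<mu>$i * (\<Sum>j\<in>UNIV. P$i$j * (x$j)^2)) = (\<Sum>i\<in>UNIV. \<Sum>j\<in>UNIV. \<mu>$i * P$i$j * (x$j)^2)"
      by (simp add: sum_distrib_left mult.assoc)
    also have "\<dots> = (\<Sum>j\<in>UNIV. \<Sum>i\<in>UNIV. \<mu>$i * P$i$j * (x$j)^2)" by (rule sum.swap)
    also have "\<dots> = (\<Sum>j\<in>UNIV. (\<Sum>i\<in>UNIV. \<mu>$i * P$i$j) * (x$j)^2)" by (simp add: sum_distrib_right)
    finally show ?thesis .
  qed
  also have "\<dots> = (\<Sum>j\<in>UNIV. \<mu>$j * (x$j)^2)"
  proof -
    have "(\<Sum>i\<in>UNIV. \<mu>$i * P$i$j) = (\<mu> v* P)$j" for j by (simp add: vector_matrix_mult_def)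
    then show ?thesis using assms(2) by (simp add: stationary_dist_def)
  qed
  finally have "(norm (sc \<mu> (P *v x)))^2 \<le> (norm (sc \<mu> x))^2" by (simp add: nsq)
  then show ?thesis by (rule power2_le_imp_le) simp
qed

lemma G_contr:
  fixes P :: "real^'s^'s"
  assumes "stochastic P" "0 \<le> lam" "lam < 1" "stationary_dist P \<mu>"
  shows "norm (sc \<mu> (Gop lam P u)) \<le> norm (sc \<mu> u)"
proof -
  let ?G = "Gop lam P u"
  have "norm (sc \<mu> ?G) = norm ((1 - lam) *\<^sub>R sc \<mu> (P *v u) + lam *\<^sub>R sc \<mu> (P *v ?G))"
    by (subst G_rec[OF assms(1-3)]) (simp add: sc_add sc_scale)
  also have "\<dots> \<le> norm ((1 - lam) *\<^sub>R sc \<mu> (P *v u)) + norm (lam *\<^sub>R sc \<mu> (P *v ?G))"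
    by (rule norm_triangle_ineq)
  also have "\<dots> = (1 - lam) * norm (sc \<mu> (P *v u)) + lam * norm (sc \<mu> (P *v ?G))"
    using assms by simp
  also have "\<dots> \<le> (1 - lam) * norm (sc \<mu> u) + lam * norm (sc \<mu> ?G)"
    using assms Q_contr[OF assms(1,4)] by (intro add_mono mult_left_mono) auto
  finally have "(1 - lam) * norm (sc \<mu> ?G) \<le> (1 - lam) * norm (sc \<mu> u)" by (simp add: algebra_simps)
  then show ?thesis using assms by simp
qed

lemma innerD_diff_left: "innerD \<mu> (x - y) w = innerD \<mu> x w - innerD \<mu> y w"
  by (simp add: innerD_def sum_subtractf algebra_simps)
lemma innerD_add_left: "innerD \<mu> (x + y) w = innerD \<mu> x w + innerD \<mu> y w"
  by (simp add: innerD_def sum.distrib algebra_simps)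
lemma innerD_scale_left: "innerD \<mu> (c *\<^sub>R x) w = c * innerD \<mu> x w"
  by (simp add: innerD_def sum_distrib_left algebra_simps)
lemma innerD_add_right: "innerD \<mu> w (x + y) = innerD \<mu> w x + innerD \<mu> w y"
  by (simp add: innerD_def sum.distrib algebra_simps)
lemma innerD_scale_right: "innerD \<mu> w (c *\<^sub>R x) = c * innerD \<mu> w x"
  by (simp add: innerD_def sum_distrib_left algebra_simps)
lemma innerD_one: "innerD \<mu> x 1 = \<mu> \<bullet> x"
  by (simp add: innerD_def inner_vec_def)

lemma proj_ex1:
  fixes W :: "(real^'s) set"
  assumes W: "subspace W" and mu: "\<And>i. \<mu>$i > 0"
  shows "\<exists>!y. y \<in> W \<and> (\<forall>w\<in>W. innerD \<mu> (x - y) w = 0)"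
proof -
  have mu0: "\<And>i. \<mu>$i \<ge> 0" using mu less_imp_le by blast
  have sT: "subspace (sc \<mu> ` W)" by (rule linear_subspace_image[OF sc_linear W])
  obtain y' z where y': "y' \<in> span (sc \<mu> ` W)" and z: "\<And>w. w \<in> span (sc \<mu> ` W) \<Longrightarrow> orthogonal z w"
    and xe: "sc \<mu> x = y' + z"
    using orthogonal_subspace_decomp_exists[of "sc \<mu> ` W" "sc \<mu> x"] by blast
  have "y' \<in> sc \<mu> ` W" using y' span_eq_iff sT by blast
  then obtain y where y: "y \<in> W" "y' = sc \<mu> y" by blast
  have ex: "y \<in> W \<and> (\<forall>w\<in>W. innerD \<mu> (x - y) w = 0)"
  proof (intro conjI ballI y)
    fix w assume "w \<in> W"
    then have "sc \<mu> w \<in> span (sc \<mu> ` W)" by (simp add: span_base)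
    then have "z \<bullet> sc \<mu> w = 0" using z orthogonal_def by blast
    moreover have "sc \<mu> (x - y) = z" using xe y by (simp add: sc_diff)
    ultimately show "innerD \<mu> (x - y) w = 0" by (simp add: innerD_sc[OF mu0])
  qed
  show ?thesis
  proof (rule ex1I[of _ y])
    show "y \<in> W \<and> (\<forall>w\<in>W. innerD \<mu> (x - y) w = 0)" by (rule ex)
    fix y2 assume y2: "y2 \<in> W \<and> (\<forall>w\<in>W. innerD \<mu> (x - y2) w = 0)"
    have dW: "y2 - y \<in> W" using y2 ex W by (simp add: subspace_diff)
    have "innerD \<mu> (y2 - y) (y2 - y) = innerD \<mu> (x - y) (y2 - y) - innerD \<mu> (x - y2) (y2 - y)"
      by (simp add: innerD_diff_left[symmetric])
    also have "\<dots> = 0" using ex y2 dW by simp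
    finally have "sc \<mu> (y2 - y) = 0" by (simp add: innerD_sc[OF mu0])
    then have "y2 - y = 0" by (rule sc_zero[OF mu])
    then show "y2 = y" by simp
  qed
qed

lemma projD_char:
  fixes W :: "(real^'s) set"
  assumes W: "subspace W" and mu: "\<And>i. \<mu>$i > 0"
  shows "projD \<mu> W x \<in> W" "\<And>w. w \<in> W \<Longrightarrow> innerD \<mu> (x - projD \<mu> W x) w = 0"
  using theI'[OF proj_ex1[OF assms, of x]] unfolding projD_def by auto

lemma projD_eq:
  fixes W :: "(real^'s) set"
  assumes W: "subspace W" and mu: "\<And>i. \<mu>$i > 0"
    and "y \<in> W" "\<And>w. w \<in> W \<Longrightarrow> innerD \<mu> (x - y) w = 0"
  shows "projD \<mu> W x = y"
  unfolding projD_def using proj_ex1[OF W mu, of x] assms(3,4) by (intro the1_equality) auto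

lemma projD_linear:
  fixes W :: "(real^'s) set"
  assumes W: "subspace W" and mu: "\<And>i. \<mu>$i > 0"
  shows "linear (projD \<mu> W)"
proof (rule linearI)
  fix a b :: "real^'s" and c :: real
  note ch = projD_char[OF W mu]
  show "projD \<mu> W (a + b) = projD \<mu> W a + projD \<mu> W b"
  proof (rule projD_eq[OF W mu])
    show "projD \<mu> W a + projD \<mu> W b \<in> W" using ch W by (simp add: subspace_add)
    fix w assume "w \<in> W"
    have eq: "a + b - (projD \<mu> W a + projD \<mu> W b) = (a - projD \<mu> W a) + (b - projD \<mu> W b)" by simp
    show "innerD \<mu> (a + b - (projD \<mu> W a + projD \<mu> W b)) w = 0"
      unfolding eq innerD_add_left using ch(2)[OF \<open>w \<in> W\<close>, of a] ch(2)[OF \<open>w \<in> W\<close>, of b] by simp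
  qed
  show "projD \<mu> W (c *\<^sub>R a) = c *\<^sub>R projD \<mu> W a"
  proof (rule projD_eq[OF W mu])
    show "c *\<^sub>R projD \<mu> W a \<in> W" using ch W by (simp add: subspace_scale)
    fix w assume "w \<in> W"
    have "c *\<^sub>R a - c *\<^sub>R projD \<mu> W a = c *\<^sub>R (a - projD \<mu> W a)" by (simp add: scaleR_right_diff_distrib)
    then show "innerD \<mu> (c *\<^sub>R a - c *\<^sub>R projD \<mu> W a) w = 0"
      using ch(2)[OF \<open>w \<in> W\<close>, of a] by (simp add: innerD_scale_left)
  qed
qed

lemma key_fix:
  fixes P :: "real^'s^'s" and W :: "(real^'s) set"
  assumes "stochastic P" "0 \<le> lam" "lam < 1" "stationary_dist P \<mu>"
    and W: "subspace W" and mu: "\<And>i. \<mu>$i > 0"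
    and v: "v \<in> W" "v = projD \<mu> W (Gop lam P v)"
  shows "Gop lam P v = v"
proof -
  have mu0: "\<And>i. \<mu>$i \<ge> 0" using mu less_imp_le by blast
  let ?G = "Gop lam P v"
  have o: "innerD \<mu> (?G - v) v = 0" using projD_char(2)[OF W mu v(1), of ?G] v(2) by simp
  then have o2: "sc \<mu> ?G \<bullet> sc \<mu> v = sc \<mu> v \<bullet> sc \<mu> v"
    by (simp add: innerD_sc[OF mu0] sc_diff inner_diff_left)
  have "(norm (sc \<mu> (?G - v)))^2 = (norm (sc \<mu> ?G))^2 - 2 * (sc \<mu> ?G \<bullet> sc \<mu> v) + (norm (sc \<mu> v))^2"
    by (simp add: sc_diff power2_norm_eq_inner inner_diff_left inner_diff_right inner_commute)
  also have "\<dots> = (norm (sc \<mu> ?G))^2 - (norm (sc \<mu> v))^2"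
    by (simp add: o2 power2_norm_eq_inner)
  also have "\<dots> \<le> 0"
    using G_contr[OF assms(1-4), of v] by (simp add: power_mono)
  finally have "sc \<mu> (?G - v) = 0" by simp
  then have "?G - v = 0" by (rule sc_zero[OF mu])
  then show ?thesis by simp
qed

lemma mat_pow_Suc: "mat_pow P (Suc n) = mat_pow P n ** P"
  by (simp add: mat_pow_def)

lemma mat_pow_nonneg:
  fixes P :: "real^'s^'s"
  assumes "stochastic P"
  shows "0 \<le> mat_pow P n $ a $ b"
proof (induction n arbitrary: b)
  case 0 then show ?case by (simp add: mat_pow_def mat_def)
next
  case (Suc n) then show ?case using assms
    by (simp add: mat_pow_Suc matrix_matrix_mult_def stochastic_def sum_nonneg)
qed

lemma mu_pos:
  fixes P :: "real^'s^'s"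
  assumes "irreducible P" "stationary_dist P \<mu>" "stochastic P"
  shows "\<mu>$j > 0"
proof -
  have st: "\<mu> v* mat_pow P n = \<mu>" for n
  proof (induction n)
    case 0 then show ?case by (simp add: mat_pow_def)
  next
    case (Suc n) then show ?case using assms(2)
      by (simp add: mat_pow_Suc vector_matrix_mul_assoc[symmetric] stationary_dist_def)
  qed
  have mu0: "\<And>i. \<mu>$i \<ge> 0" using assms(2) by (simp add: stationary_dist_def)
  have "\<exists>i. \<mu>$i > 0"
  proof (rule ccontr)
    assume "\<not> ?thesis"
    then have "\<mu>$i = 0" for i using mu0[of i] by (metis antisym not_less)
    then show False using assms(2) by (simp add: stationary_dist_def)
  qed
  then obtain i where i: "\<mu>$i > 0" by blast
  obtain n where n: "mat_pow P n $ i $ j > 0" using assms(1) irreducible_def by blast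
  have "\<mu>$j = (\<Sum>k\<in>UNIV. \<mu>$k * mat_pow P n $ k $ j)"
    using arg_cong[OF st[of n], of "\<lambda>v. v$j"] by (simp add: vector_matrix_mult_def)
  also have "\<dots> \<ge> \<mu>$i * mat_pow P n $ i $ j"
  proof -
    have nn: "\<And>a b. 0 \<le> mat_pow P a $ b $ j" by (rule mat_pow_nonneg[OF assms(3)])
    show ?thesis using mu0 nn by (intro member_le_sum) auto
  qed
  finally show ?thesis using i n by (smt (verit) mult_pos_pos)
qed

lemma const_fix:
  fixes P :: "real^'s^'s"
  assumes st: "stochastic P" and irr: "irreducible P" and fx: "P *v v = v"
  shows "\<exists>t. v = t *\<^sub>R 1"
proof -
  define M where "M = Max (range (\<lambda>i. v$i))"
  have "M \<in> range (\<lambda>i. v$i)" unfolding M_def by (rule Max_in) auto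
  then obtain i0 where i0: "v$i0 = M" by auto
  have le: "v$k \<le> M" for k unfolding M_def by (rule Max_ge) auto
  have P0: "0 \<le> P$j$k" for j k using st by (simp add: stochastic_def)
  have row1: "(\<Sum>k\<in>UNIV. P$j$k) = 1" for j using st by (simp add: stochastic_def)
  have spr: "v$j = M \<Longrightarrow> P$j$k > 0 \<Longrightarrow> v$k = M" for j k
  proof -
    assume vj: "v$j = M" and pjk: "P$j$k > 0"
    have "(\<Sum>k\<in>UNIV. P$j$k * (M - v$k)) = M * (\<Sum>k\<in>UNIV. P$j$k) - (\<Sum>k\<in>UNIV. P$j$k * v$k)"
      by (simp add: algebra_simps sum_subtractf sum_distrib_left)
    also have "(\<Sum>k\<in>UNIV. P$j$k * v$k) = (P *v v)$j" by (simp add: matrix_vector_mult_def)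
    also have "\<dots> = M" using fx vj by simp
    finally have "(\<Sum>k\<in>UNIV. P$j$k * (M - v$k)) = 0" using row1 by simp
    moreover have "\<forall>k\<in>UNIV. 0 \<le> P$j$k * (M - v$k)" using P0 le by simp
    ultimately have "P$j$k * (M - v$k) = 0" using sum_nonneg_eq_0_iff[of UNIV "\<lambda>k. P$j$k * (M - v$k)"] by simp
    then show "v$k = M" using pjk by simp
  qed
  have reach: "mat_pow P n $ i0 $ k > 0 \<Longrightarrow> v$k = M" for n k
  proof (induction n arbitrary: k)
    case 0 then show ?case using i0 by (simp add: mat_pow_def mat_def split: if_splits)
  next
    case (Suc n)
    have "0 < (\<Sum>j\<in>UNIV. mat_pow P n $ i0 $ j * P$j$k)"
      using Suc.prems by (simp add: mat_pow_Suc matrix_matrix_mult_def)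
    then obtain j where j: "0 < mat_pow P n $ i0 $ j * P$j$k"
      by (metis (no_types, lifting) not_less sum_nonpos)
    have "0 \<le> mat_pow P n $ i0 $ j" by (rule mat_pow_nonneg[OF st])
    then have a: "0 < mat_pow P n $ i0 $ j" and b: "0 < P$j$k" using j P0[of j k]
      by (auto simp: zero_less_mult_iff)
    show ?case using spr[OF Suc.IH[OF a] b] .
  qed
  have "v$k = M" for k
  proof -
    obtain n where "mat_pow P n $ i0 $ k > 0" using irr irreducible_def by blast
    then show ?thesis by (rule reach)
  qed
  then have "v = M *\<^sub>R 1" by (simp add: vec_eq_iff)
  then show ?thesis by blast
qed

theorem lemma3:
  fixes P :: "real^'s^'s" and \<mu> R :: "real^'s" and lam :: real and \<Phi> :: "real^'d^'s"
  assumes "stochastic P" and "irreducible P" and "aperiodic P"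
    and "stationary_dist P \<mu>"
    and "0 \<le> lam" and "lam < 1"
    and "rank \<Phi> = CARD('d)"
  shows "\<exists>\<theta>s. \<theta>s \<in> E_Phi_e \<Phi>
            \<and> \<Phi> *v \<theta>s = projD \<mu> (W_span \<Phi> (E_Phi_e \<Phi>)) (bellman_lambda lam P \<mu> R (\<Phi> *v \<theta>s))
            \<and> (\<forall>\<theta>'. \<theta>' \<in> E_Phi_e \<Phi>
                 \<and> \<Phi> *v \<theta>' = projD \<mu> (W_span \<Phi> (E_Phi_e \<Phi>)) (bellman_lambda lam P \<mu> R (\<Phi> *v \<theta>'))
                 \<longrightarrow> \<theta>' = \<theta>s)
            \<and> {\<theta>. \<Phi> *v \<theta> = projD \<mu> (W_span \<Phi> UNIV) (bellman_lambda lam P \<mu> R (\<Phi> *v \<theta>))}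
              = {\<theta>s + s | s. s \<in> S_Phi_e \<Phi>}"
proof -
  note st = assms(1) and sd = assms(4) and lm = assms(5,6)
  note stl = st lm
  have mu: "\<And>i. \<mu>$i > 0" by (rule mu_pos[OF assms(2) assms(4) assms(1)])
  have injf: "inj ((*v) \<Phi>)" using assms(7) full_rank_injective by blast
  have linf: "linear ((*v) \<Phi>)" by (rule matrix_vector_mul_linear)
  define X where "X = {\<theta>::real^'d. \<Phi> *v \<theta> = 1}"
  define S where "S = S_Phi_e \<Phi>"
  have S_X: "S = span X" by (simp add: S_def S_Phi_e_def X_def)
  define E where "E = E_Phi_e \<Phi>"
  have E_S: "E = {\<theta>. \<forall>s\<in>S. \<theta> \<bullet> s = 0}" by (simp add: E_def E_Phi_e_def S_def)
  define WE where "WE = W_span \<Phi> E"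
  have WE_im: "WE = (*v) \<Phi> ` E" by (simp add: WE_def W_span_def)
  define WF where "WF = W_span \<Phi> UNIV"
  have WF_im: "WF = range ((*v) \<Phi>)" by (simp add: WF_def W_span_def)
  define T where "T = bellman_lambda lam P \<mu> R"
  define G where "G = Gop lam P"
  define PiE where "PiE = projD \<mu> WE"
  define PiF where "PiF = projD \<mu> WF"
  have subE: "subspace E" unfolding E_S subspace_def by (auto simp: inner_add_left)
  have subWE: "subspace WE" unfolding WE_im by (rule linear_subspace_image[OF linf subE])
  have subWF: "subspace WF" unfolding WF_im by (rule linear_subspace_image[OF linf subspace_UNIV])
  have WE_WF: "WE \<subseteq> WF" unfolding WE_im WF_im by auto
  have Sone: "\<exists>t. \<Phi> *v s = t *\<^sub>R 1" if "s \<in> S" for s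
  proof -
    have "\<Phi> *v s \<in> (*v) \<Phi> ` span X" using that S_X by auto
    also have "\<dots> = span ((*v) \<Phi> ` X)" by (rule linear_span_image[OF linf, symmetric])
    also have "\<dots> \<subseteq> span {1}" by (rule span_mono) (auto simp: X_def)
    finally show ?thesis by (auto simp: span_singleton)
  qed
  have decomp: "\<exists>\<eta> s. \<eta> \<in> E \<and> s \<in> S \<and> \<theta> = \<eta> + s" for \<theta>
  proof -
    obtain y z where y: "y \<in> span X" and z: "\<And>w. w \<in> span X \<Longrightarrow> orthogonal z w" and e: "\<theta> = y + z"
      using orthogonal_subspace_decomp_exists[of X \<theta>] by blast
    have "z \<in> E" unfolding E_S S_X using z orthogonal_def by blast
    moreover have "y \<in> S" using y S_X by simp
    ultimately show ?thesis using e by (metis add.commute)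
  qed
  have ES: "\<eta> = 0" if "\<eta> \<in> E" "\<eta> \<in> S" for \<eta>
    using that unfolding E_S by auto
  have WE_const: "v = 0" if vW: "v \<in> WE" and vt: "v = t *\<^sub>R 1" for v t
  proof (cases "t = 0")
    case True then show ?thesis using vt by simp
  next
    case False
    obtain \<eta> where \<eta>: "\<eta> \<in> E" "v = \<Phi> *v \<eta>" using vW WE_im by auto
    have h: "\<Phi> *v \<eta> = t *\<^sub>R 1" using \<eta> vt by simp
    have "\<Phi> *v ((1/t) *\<^sub>R \<eta>) = (1/t) *\<^sub>R (t *\<^sub>R 1)" by (simp only: matrix_vector_mult_scaleR h)
    then have "\<Phi> *v ((1/t) *\<^sub>R \<eta>) = 1" using False by simp
    then have "(1/t) *\<^sub>R \<eta> \<in> S" unfolding S_X X_def by (simp add: span_base)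
    then have "t *\<^sub>R ((1/t) *\<^sub>R \<eta>) \<in> S" unfolding S_X by (rule span_mul)
    then have "\<eta> \<in> S" using False by simp
    then have "\<eta> = 0" using ES \<eta> by blast
    then show ?thesis using \<eta> by simp
  qed
  have Tadd: "T (v + u) = T v + G u" for v u unfolding T_def G_def by (rule T_add[OF stl])
  have Glin: "linear G" unfolding G_def by (rule Gop_linear[OF stl])
  have Gone: "G (t *\<^sub>R 1) = t *\<^sub>R 1" for t
    unfolding linear_cmul[OF Glin] by (simp add: G_def Gop_one[OF stl])
  have PiElin: "linear PiE" unfolding PiE_def by (rule projD_linear[OF subWE mu])
  note chE = projD_char[OF subWE mu, folded PiE_def]
  note chF = projD_char[OF subWF mu, folded PiF_def]
  have fixc: "v = 0" if "v \<in> WE" "v = PiE (G v)" for v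
  proof -
    have Gv: "G v = v" unfolding G_def by (rule key_fix[OF stl sd subWE mu that(1) that(2)[unfolded PiE_def G_def]])
    have "v = (1 - lam) *\<^sub>R (P *v v) + lam *\<^sub>R (P *v v)"
      using G_rec[OF stl, of v] Gv by (simp add: G_def)
    then have "P *v v = v" by (simp add: scaleR_add_left[symmetric])
    then obtain t where "v = t *\<^sub>R 1" using const_fix[OF st assms(2)] by blast
    then show ?thesis using WE_const that(1) by blast
  qed
  define L where "L v = v - PiE (G v)" for v
  have linL: "linear L"
    unfolding L_def
    by (rule linearI) (simp_all add: linear_add[OF Glin] linear_add[OF PiElin] linear_cmul[OF Glin] linear_cmul[OF PiElin] scaleR_right_diff_distrib)
  have LWE: "L ` WE \<subseteq> WE"
    unfolding L_def using chE(1) subWE by (auto intro: subspace_diff)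
  have injL: "inj_on L WE"
  proof (rule inj_onI)
    fix a b assume ab: "a \<in> WE" "b \<in> WE" "L a = L b"
    have "L (a - b) = 0" using ab(3) linear_diff[OF linL] by simp
    then have "a - b = PiE (G (a - b))" unfolding L_def by simp
    then have "a - b = 0" using fixc subWE ab(1,2) subspace_diff by blast
    then show "a = b" by simp
  qed
  have spWE: "span WE = WE" using subWE span_eq_iff by blast
  have "dim (L ` WE) = dim WE" using dim_image_eq[OF linL, of WE] injL unfolding spWE by blast
  then have surjL: "L ` WE = WE"
    using subspace_dim_equal[OF linear_subspace_image[OF linL subWE] subWE LWE] by simp
  have "PiE (T 0) \<in> WE" by (rule chE(1))
  then obtain v where v: "v \<in> WE" "L v = PiE (T 0)" using surjL by (metis imageE)
  have vfix: "v = PiE (T v)"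
  proof -
    have "T v = T 0 + G v" using Tadd[of 0 v] by simp
    then have "PiE (T v) = PiE (T 0) + PiE (G v)" by (simp add: linear_add[OF PiElin])
    also have "\<dots> = v" using v(2) unfolding L_def by (metis diff_add_cancel)
    finally show ?thesis by simp
  qed
  obtain \<theta>s where ths: "\<theta>s \<in> E" "v = \<Phi> *v \<theta>s" using v(1) WE_im by auto
  have uniq: "\<theta>' = \<theta>s" if "\<theta>' \<in> E" "\<Phi> *v \<theta>' = PiE (T (\<Phi> *v \<theta>'))" for \<theta>'
  proof -
    define d where "d = \<Phi> *v \<theta>' - \<Phi> *v \<theta>s"
    have dW: "d \<in> WE" unfolding d_def WE_im matrix_vector_mult_diff_distrib[symmetric]
      using that(1) ths(1) subE by (auto intro: subspace_diff)
    have "T (\<Phi> *v \<theta>') = T (\<Phi> *v \<theta>s) + G d" using Tadd[of "\<Phi> *v \<theta>s" d] by (simp add: d_def)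
    then have "PiE (T (\<Phi> *v \<theta>')) = PiE (T (\<Phi> *v \<theta>s)) + PiE (G d)" by (simp add: linear_add[OF PiElin])
    then have "\<Phi> *v \<theta>' = \<Phi> *v \<theta>s + PiE (G d)" using that(2) vfix ths(2) by simp
    then have "d = PiE (G d)" unfolding d_def by (metis add_diff_cancel_left')
    then have "d = 0" using fixc dW by blast
    then have "\<Phi> *v \<theta>' = \<Phi> *v \<theta>s" by (simp add: d_def)
    then show ?thesis using injf by (simp add: inj_eq)
  qed
  have thsfix: "\<Phi> *v \<theta>s = PiE (T (\<Phi> *v \<theta>s))" using vfix ths(2) by simp
  have orthF: "innerD \<mu> (T (\<Phi> *v \<theta>s) - \<Phi> *v \<theta>s) w = 0" if wF: "w \<in> WF" for w
  proof -
    obtain \<theta> where w: "w = \<Phi> *v \<theta>" using wF WF_im by auto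
    obtain \<eta> s where es: "\<eta> \<in> E" "s \<in> S" "\<theta> = \<eta> + s" using decomp by blast
    obtain t where t: "\<Phi> *v s = t *\<^sub>R 1" using Sone es(2) by blast
    have w2: "w = \<Phi> *v \<eta> + t *\<^sub>R 1" using w es(3) t by (simp add: matrix_vector_right_distrib)
    have a: "innerD \<mu> (T (\<Phi> *v \<theta>s) - \<Phi> *v \<theta>s) (\<Phi> *v \<eta>) = 0"
      using chE(2)[of "\<Phi> *v \<eta>" "T (\<Phi> *v \<theta>s)"] es(1) thsfix WE_im by auto
    have b: "innerD \<mu> (T (\<Phi> *v \<theta>s) - \<Phi> *v \<theta>s) 1 = 0"
      unfolding innerD_one using mu_T[OF stl sd, of R "\<Phi> *v \<theta>s"] by (simp add: T_def inner_diff_right)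
    show ?thesis unfolding w2 innerD_add_right innerD_scale_right a b by simp
  qed
  have setEq: "{\<theta>. \<Phi> *v \<theta> = PiF (T (\<Phi> *v \<theta>))} = {\<theta>s + s | s. s \<in> S}"
  proof (intro set_eqI iffI)
    fix \<theta> assume "\<theta> \<in> {\<theta>. \<Phi> *v \<theta> = PiF (T (\<Phi> *v \<theta>))}"
    then have th: "\<Phi> *v \<theta> = PiF (T (\<Phi> *v \<theta>))" by simp
    obtain \<eta> s where es: "\<eta> \<in> E" "s \<in> S" "\<theta> = \<eta> + s" using decomp by blast
    obtain t where t: "\<Phi> *v s = t *\<^sub>R 1" using Sone es(2) by blast
    have e1: "\<Phi> *v \<theta> = \<Phi> *v \<eta> + t *\<^sub>R 1" using es(3) t by (simp add: matrix_vector_right_distrib)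
    have e2: "T (\<Phi> *v \<theta>) = T (\<Phi> *v \<eta>) + t *\<^sub>R 1" unfolding e1 Tadd Gone ..
    have "\<Phi> *v \<eta> = PiE (T (\<Phi> *v \<eta>))"
    proof (rule projD_eq[OF subWE mu, folded PiE_def, symmetric])
      show "\<Phi> *v \<eta> \<in> WE" using es(1) WE_im by auto
      fix w assume "w \<in> WE"
      then have "w \<in> WF" using WE_WF by auto
      have "T (\<Phi> *v \<eta>) - \<Phi> *v \<eta> = T (\<Phi> *v \<theta>) - \<Phi> *v \<theta>" using e1 e2 by simp
      also have "\<dots> = T (\<Phi> *v \<theta>) - PiF (T (\<Phi> *v \<theta>))" using th by simp
      finally show "innerD \<mu> (T (\<Phi> *v \<eta>) - \<Phi> *v \<eta>) w = 0" using chF(2)[OF \<open>w \<in> WF\<close>] by simp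
    qed
    then have "\<eta> = \<theta>s" using uniq es(1) by blast
    then show "\<theta> \<in> {\<theta>s + s | s. s \<in> S}" using es by blast
  next
    fix \<theta> assume "\<theta> \<in> {\<theta>s + s | s. s \<in> S}"
    then obtain s where s: "s \<in> S" "\<theta> = \<theta>s + s" by blast
    obtain t where t: "\<Phi> *v s = t *\<^sub>R 1" using Sone s(1) by blast
    have e1: "\<Phi> *v \<theta> = \<Phi> *v \<theta>s + t *\<^sub>R 1" using s(2) t by (simp add: matrix_vector_right_distrib)
    have e2: "T (\<Phi> *v \<theta>) = T (\<Phi> *v \<theta>s) + t *\<^sub>R 1" unfolding e1 Tadd Gone ..
    have "PiF (T (\<Phi> *v \<theta>)) = \<Phi> *v \<theta>"
    proof (rule projD_eq[OF subWF mu, folded PiF_def])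
      show "\<Phi> *v \<theta> \<in> WF" using WF_im by auto
      fix w assume "w \<in> WF"
      have "T (\<Phi> *v \<theta>) - \<Phi> *v \<theta> = T (\<Phi> *v \<theta>s) - \<Phi> *v \<theta>s" using e1 e2 by simp
      then show "innerD \<mu> (T (\<Phi> *v \<theta>) - \<Phi> *v \<theta>) w = 0" using orthF[OF \<open>w \<in> WF\<close>] by simp
    qed
    then show "\<theta> \<in> {\<theta>. \<Phi> *v \<theta> = PiF (T (\<Phi> *v \<theta>))}" by simp
  qed
  have "\<theta>s \<in> E \<and> \<Phi> *v \<theta>s = PiE (T (\<Phi> *v \<theta>s))
        \<and> (\<forall>\<theta>'. \<theta>' \<in> E \<and> \<Phi> *v \<theta>' = PiE (T (\<Phi> *v \<theta>')) \<longrightarrow> \<theta>' = \<theta>s)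
        \<and> {\<theta>. \<Phi> *v \<theta> = PiF (T (\<Phi> *v \<theta>))} = {\<theta>s + s | s. s \<in> S}"
    using ths(1) thsfix uniq setEq by blast
  then show ?thesis unfolding PiE_def PiF_def T_def WE_def WF_def E_def S_def by blast
qed

end
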